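(* Assume the setup of the context. Let $f\in C^r(\mathbb R^m,\mathbb R^{d^+})$ with $f\circ R=f$ on $\Lambda$ and $\int_\Lambda f\,d\mu=0$, and let $h\in C^{r+1}(\mathbb R^m,\mathbb R^{d^-})$ with $h(Ry)=h(y)$ for all $y\in\mathbb R^m$. Then there exists an admissible $v$ such that the limit defining $E_0(v)$ exists and $E_0(v)=\int_\Lambda f\otimes h\,d\mu$.
   Context: Let $r\ge1$, $\Lambda\subset\mathbb R^m$ compact, and $g\in C^r(\mathbb R^m,\mathbb R^m)$ such that $\Lambda$ is invariant under the flow $g_t$ of $\dot y=g(y)$. Let $\mu$ be a Borel probability measure on $\Lambda$ that is $g_t$-invariant, ergodic and mixing (i.e. $\int_\Lambda \phi\,(\psi\circ g_t)\,d\mu\to\int\phi\,d\mu\int\psi\,d\mu$ as $t\to\infty$ for $\phi,\psi\in L^2(\mu)$). Let $R\in\mathbb R^{m\times m}$ with $R^2=I$, $R(\Lambda)=\Lambda$, $\mu$ $R$-invariant, and $g(Ry)=-Rg(y)$ for all $y\in\Lambda$. Let $d=d^++d^-$ and $A=\mathrm{diag}(I_{d^+},-I_{d^-})$. A function $v\in C^r(\mathbb R^m,\mathbb R^d)$ is admissible if $v(Ry)=Av(y)$ for all $y\in\Lambda$ and $\int_\Lambda v\,d\mu=0$; write $v=(v^+,v^-)$ with $v^\pm$ valued in $\mathbb R^{d^\pm}$ and set $E_0(v)=2\lim_{T\to\infty}\int_0^T\int_\Lambda v^+\otimes(v^-\circ g_t)\,d\mu\,dt\in\mathbb R^{d^+\times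 d^-}$, where $u\otimes w=uw^T$. *)

theory Defs
  imports "HOL-Analysis.Analysis" "HOL-Probability.Probability"
begin

fun Ck :: "nat \<Rightarrow> ('a::real_normed_vector \<Rightarrow> 'b::real_normed_vector) \<Rightarrow> bool" where
  "Ck 0 f = continuous_on UNIV f"
| "Ck (Suc k) f = ((\<forall>x. f differentiable (at x)) \<and> continuous_on UNIV f \<and>
       (\<forall>u. Ck k (\<lambda>x. frechet_derivative f (at x) u)))"

definition is_flow_on :: "(real^'m \<Rightarrow> real^'m) \<Rightarrow> (real \<Rightarrow> real^'m \<Rightarrow> real^'m) \<Rightarrow> (real^'m) set \<Rightarrow> bool" where
  "is_flow_on g fl Lam \<longleftrightarrow> (\<forall>y\<in>Lam. fl 0 y = y \<and> (\<forall>t. fl t y \<in> Lam \<and>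
      ((\<lambda>s. fl s y) has_vector_derivative g (fl t y)) (at t)))"

text \<open>v = (v^+, v^-) : R^m \<rightarrow> R^{d+} \<times> R^{d-}; A = diag(I,-I).\<close>
definition admissible ::
  "nat \<Rightarrow> (real^'m) set \<Rightarrow> real^'m^'m \<Rightarrow> (real^'m) measure \<Rightarrow> (real^'m \<Rightarrow> ((real^'p) \<times> (real^'n))) \<Rightarrow> bool" where
  "admissible r Lam R \<mu> v \<longleftrightarrow> Ck r v \<and>
     (\<forall>y\<in>Lam. v (R *v y) = (fst (v y), - snd (v y))) \<and> integral\<^sup>L \<mu> v = 0"

text \<open>The limit defining E_0(v) exists and equals M (entrywise, u \<otimes> w = u w^T).\<close>
definition E0_is ::
  "(real^'m) measure \<Rightarrow> (real \<Rightarrow> real^'m \<Rightarrow> real^'m) \<Rightarrow> (real^'m \<Rightarrow> ((real^'p) \<times> (real^'n))) \<Rightarrow> real^'n^'p \<Rightarrow> bool" where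
  "E0_is \<mu> fl v M \<longleftrightarrow> (\<forall>i j.
     (\<forall>T\<ge>0. (\<lambda>t. \<integral>x. fst (v x) $ i * snd (v (fl t x)) $ j \<partial>\<mu>) integrable_on {0..T}) \<and>
     ((\<lambda>T. 2 * integral {0..T} (\<lambda>t. \<integral>x. fst (v x) $ i * snd (v (fl t x)) $ j \<partial>\<mu>))
        \<longlongrightarrow> M $ i $ j) at_top)"

end

theory Submission
  imports Defs
begin


lemma Ck_cont: "Ck k f \<Longrightarrow> continuous_on UNIV f"
  by (cases k) auto

lemma Ck_Suc_mono: "Ck (Suc k) f \<Longrightarrow> Ck k f"
proof (induction k arbitrary: f)
  case 0 then show ?case by simp
next
  case (Suc k) then show ?case by (metis Ck.simps(2))
qed

lemma Ck_le: "k \<le> n \<Longrightarrow> Ck n f \<Longrightarrow> Ck k f"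
proof (induction n)
  case 0 then show ?case by simp
next
  case (Suc n) then show ?case using Ck_Suc_mono le_Suc_eq by blast
qed

lemma fd_works: "f differentiable (at x) \<Longrightarrow> (f has_derivative frechet_derivative f (at x)) (at x)"
  using frechet_derivative_works by blast

lemma Ck_const: "Ck k (\<lambda>x::'a::real_normed_vector. c::'b::real_normed_vector)"
proof (induction k arbitrary: c)
  case 0 then show ?case by simp
next
  case (Suc k)
  have "frechet_derivative (\<lambda>x::'a. c) (at x) = (\<lambda>u. 0)" for x
    by (rule frechet_derivative_at[symmetric]) simp
  then show ?case using Suc by (simp add: continuous_on_const)
qed

lemma Ck_add: "Ck k f \<Longrightarrow> Ck k g \<Longrightarrow> Ck k (\<lambda>x. f x + g x)"
proof (induction k arbitrary: f g)
  case 0 then show ?case by (simp add: continuous_on_add)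
next
  case (Suc k)
  have d: "frechet_derivative (\<lambda>x. f x + g x) (at x) = (\<lambda>u. frechet_derivative f (at x) u + frechet_derivative g (at x) u)" for x
    by (rule frechet_derivative_at[symmetric]) (use Suc.prems in \<open>auto intro!: has_derivative_add fd_works\<close>)
  show ?case using Suc.prems Suc.IH unfolding Ck.simps d
    by (auto simp: continuous_on_add)
qed

lemma Ck_linear: "bounded_linear L \<Longrightarrow> Ck k f \<Longrightarrow> Ck k (\<lambda>x. L (f x))"
proof (induction k arbitrary: f)
  case 0 then show ?case
    by (simp add: bounded_linear.continuous_on)
next
  case (Suc k)
  have hd: "((\<lambda>x. L (f x)) has_derivative (\<lambda>u. L (frechet_derivative f (at x) u))) (at x)" for x
    using Suc.prems by (intro bounded_linear.has_derivative[OF Suc.prems(1)] fd_works) simp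
  have d: "frechet_derivative (\<lambda>x. L (f x)) (at x) = (\<lambda>u. L (frechet_derivative f (at x) u))" for x
    by (rule frechet_derivative_at[symmetric, OF hd])
  have c: "continuous_on UNIV (\<lambda>x. L (f x))"
    using Suc.prems by (intro bounded_linear.continuous_on[OF Suc.prems(1)]) (simp add: Ck_cont)
  have dd: "(\<lambda>x. L (f x)) differentiable (at x)" for x
    using hd differentiableI by blast
  show ?case using Suc.prems Suc.IH c dd unfolding Ck.simps d
    by blast
qed

lemma Ck_scaleR: "Ck k (a::'a::real_normed_vector \<Rightarrow> real) \<Longrightarrow> Ck k b \<Longrightarrow> Ck k (\<lambda>x. a x *\<^sub>R b x)"
proof (induction k arbitrary: a b)
  case 0 then show ?case by (simp add: continuous_on_scaleR)
next
  case (Suc k)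
  have d: "frechet_derivative (\<lambda>x. a x *\<^sub>R b x) (at x) = (\<lambda>u. a x *\<^sub>R frechet_derivative b (at x) u + frechet_derivative a (at x) u *\<^sub>R b x)" for x
    by (rule frechet_derivative_at[symmetric]) (use Suc.prems in \<open>auto intro!: has_derivative_scaleR fd_works\<close>)
  have "Ck k (\<lambda>x. a x *\<^sub>R frechet_derivative b (at x) u + frechet_derivative a (at x) u *\<^sub>R b x)" for u
    using Suc.prems by (intro Ck_add Suc.IH) (auto intro: Ck_Suc_mono)
  then show ?case using Suc.prems unfolding Ck.simps d
    by (auto simp: continuous_on_scaleR)
qed

lemma Ck_sum: "finite S \<Longrightarrow> (\<And>i. i \<in> S \<Longrightarrow> Ck k (F i)) \<Longrightarrow> Ck k (\<lambda>x. \<Sum>i\<in>S. F i x)"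
  by (induction S rule: finite_induct) (auto intro: Ck_add Ck_const)

lemma Ck_pair: "Ck k f \<Longrightarrow> Ck k g \<Longrightarrow> Ck k (\<lambda>x. (f x, g x))"
proof -
  assume f: "Ck k f" and g: "Ck k g"
  have "Ck k (\<lambda>x. (f x, 0) + (0, g x))"
    by (intro Ck_add Ck_linear[OF _ f] Ck_linear[OF _ g])
      (auto intro: bounded_linear_Pair bounded_linear_zero bounded_linear_ident)
  then show ?thesis by simp
qed

lemma Ck_nth: "Ck k f \<Longrightarrow> Ck k (\<lambda>x. f x $ i)"
  by (rule Ck_linear[OF bounded_linear_vec_nth])



lemma lip_bound:
  fixes F :: "real \<Rightarrow> real"
  assumes d: "\<And>s. (F has_real_derivative F' s) (at s)" and b: "\<And>s. \<bar>F' s\<bar> \<le> M"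
  shows "\<bar>F s - F t\<bar> \<le> M * \<bar>s - t\<bar>"
proof -
  have *: "\<bar>F b - F a\<bar> \<le> M * \<bar>b - a\<bar>" if "a < b" for a b
  proof -
    have "\<exists>z. a < z \<and> z < b \<and> F b - F a = (b - a) * F' z" by (rule MVT2[OF that]) (rule d)
    then obtain z where "F b - F a = (b - a) * F' z" by blast
    then have "\<bar>F b - F a\<bar> = \<bar>b - a\<bar> * \<bar>F' z\<bar>" by (simp add: abs_mult)
    also have "\<dots> \<le> \<bar>b - a\<bar> * M" using b by (intro mult_left_mono) auto
    finally show ?thesis by (simp add: mult.commute)
  qed
  show ?thesis
    using *[of s t] *[of t s] by (cases "s < t"; cases "t < s") (auto simp: abs_minus_commute)
qed

lemma deriv_integral:
  fixes \<mu> :: "'a::real_normed_vector measure" and fl :: "real \<Rightarrow> 'a \<Rightarrow> 'a"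
  assumes fin: "finite_measure \<mu>"
    and space: "space \<mu> = Lam"
    and flm: "\<And>t. fl t \<in> measurable \<mu> \<mu>"
    and fld: "\<And>x t. x \<in> Lam \<Longrightarrow> ((\<lambda>s. fl s x) has_vector_derivative g (fl t x)) (at t)"
    and flL: "\<And>x t. x \<in> Lam \<Longrightarrow> fl t x \<in> Lam"
    and phim: "\<phi> \<in> borel_measurable \<mu>" and phib: "\<And>x. x \<in> Lam \<Longrightarrow> \<bar>\<phi> x\<bar> \<le> B"
    and km: "k \<in> borel_measurable \<mu>" and kb: "\<And>y. y \<in> Lam \<Longrightarrow> \<bar>k y\<bar> \<le> K"
    and kd: "\<And>y. (k has_derivative Dk y) (at y)"
    and Dm: "D \<in> borel_measurable \<mu>" and Db: "\<And>y. y \<in> Lam \<Longrightarrow> \<bar>D y\<bar> \<le> M"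
    and DD: "\<And>y. y \<in> Lam \<Longrightarrow> Dk y (g y) = D y"
  shows "((\<lambda>t. \<integral>x. \<phi> x * k (fl t x) \<partial>\<mu>) has_real_derivative (\<integral>x. \<phi> x * D (fl t x) \<partial>\<mu>)) (at t)"
proof -
  interpret finite_measure \<mu> by (rule fin)
  have pd: "((\<lambda>s. k (fl s x)) has_real_derivative D (fl s x)) (at s)" if x: "x \<in> Lam" for x s
  proof -
    have "((\<lambda>s. k (fl s x)) has_derivative (\<lambda>h. Dk (fl s x) (h *\<^sub>R g (fl s x)))) (at s)"
      using has_derivative_compose[OF fld[OF x, of s, unfolded has_vector_derivative_def] kd] .
    moreover have "(\<lambda>h. Dk (fl s x) (h *\<^sub>R g (fl s x))) = (*) (D (fl s x))"
    proof
      fix h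
      have "linear (Dk (fl s x))" using kd has_derivative_linear by blast
      then have "Dk (fl s x) (h *\<^sub>R g (fl s x)) = h *\<^sub>R Dk (fl s x) (g (fl s x))"
        by (simp add: linear_scale)
      then show "Dk (fl s x) (h *\<^sub>R g (fl s x)) = D (fl s x) * h"
        using DD[OF flL[OF x]] by simp
    qed
    ultimately show ?thesis by (simp add: has_field_derivative_def)
  qed
  have lip: "\<bar>k (fl s x) - k (fl t x)\<bar> \<le> M * \<bar>s - t\<bar>" if x: "x \<in> Lam" for x s t
    by (rule lip_bound[OF pd[OF x]]) (use Db flL x in auto)


  have B0: "\<And>x. x \<in> Lam \<Longrightarrow> 0 \<le> B" using phib by (meson abs_ge_zero order_trans)
  have flkm: "(\<lambda>x. k (fl s x)) \<in> borel_measurable \<mu>" for s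
    using measurable_compose[OF flm km] .
  have flDm: "(\<lambda>x. D (fl s x)) \<in> borel_measurable \<mu>" for s
    using measurable_compose[OF flm Dm] .
  have intk: "integrable \<mu> (\<lambda>x. \<phi> x * k (fl s x))" for s
  proof (rule integrable_const_bound[where B="B*K"])
    show "AE x in \<mu>. norm (\<phi> x * k (fl s x)) \<le> B * K"
    proof (rule AE_I2)
      fix x assume "x \<in> space \<mu>"
      then have x: "x \<in> Lam" using space by simp
      show "norm (\<phi> x * k (fl s x)) \<le> B * K"
        unfolding real_norm_def abs_mult
        by (rule mult_mono) (use phib kb flL x B0 in auto)
    qed
  qed (use phim flkm in measurable)
  show ?thesis
    unfolding has_field_derivative_iff tendsto_at_iff_sequentially comp_def
  proof (intro allI impI)
    fix X :: "nat \<Rightarrow> real" assume X1: "\<forall>i. X i \<in> UNIV - {t}" and X2: "X \<longlonglongrightarrow> t"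
    define q where "q i x = (k (fl (X i) x) - k (fl t x)) / (X i - t)" for i x
    have eq: "((\<integral>x. \<phi> x * k (fl (X i) x) \<partial>\<mu>) - (\<integral>x. \<phi> x * k (fl t x) \<partial>\<mu>)) / (X i - t)
        = (\<integral>x. \<phi> x * q i x \<partial>\<mu>)" for i
    proof -
      have "(\<integral>x. \<phi> x * q i x \<partial>\<mu>) = (\<integral>x. (\<phi> x * k (fl (X i) x) - \<phi> x * k (fl t x)) / (X i - t) \<partial>\<mu>)"
        unfolding q_def by (intro Bochner_Integration.integral_cong) (auto simp: right_diff_distrib)
      also have "\<dots> = ((\<integral>x. \<phi> x * k (fl (X i) x) \<partial>\<mu>) - (\<integral>x. \<phi> x * k (fl t x) \<partial>\<mu>)) / (X i - t)"
        by (simp add: intk)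
      finally show ?thesis by simp
    qed
    show "(\<lambda>i. ((\<integral>x. \<phi> x * k (fl (X i) x) \<partial>\<mu>) - (\<integral>x. \<phi> x * k (fl t x) \<partial>\<mu>)) / (X i - t))
        \<longlonglongrightarrow> (\<integral>x. \<phi> x * D (fl t x) \<partial>\<mu>)"
      unfolding eq
    proof (rule integral_dominated_convergence[where w="\<lambda>_. B * M"])
      show "(\<lambda>x. \<phi> x * D (fl t x)) \<in> borel_measurable \<mu>" using phim flDm by measurable
      show "(\<lambda>x. \<phi> x * q i x) \<in> borel_measurable \<mu>" for i
        unfolding q_def using phim flkm by measurable
      show "integrable \<mu> (\<lambda>_. B * M)" by simp
      show "AE x in \<mu>. (\<lambda>i. \<phi> x * q i x) \<longlonglongrightarrow> \<phi> x * D (fl t x)"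
      proof (rule AE_I2)
        fix x assume "x \<in> space \<mu>"
        then have x: "x \<in> Lam" using space by simp
        have "(\<lambda>i. q i x) \<longlonglongrightarrow> D (fl t x)"
          using pd[OF x, of t] X1 X2 unfolding has_field_derivative_iff tendsto_at_iff_sequentially comp_def q_def
          by blast
        then show "(\<lambda>i. \<phi> x * q i x) \<longlonglongrightarrow> \<phi> x * D (fl t x)"
          by (rule tendsto_mult_left)
      qed
      show "AE x in \<mu>. norm (\<phi> x * q i x) \<le> B * M" for i
      proof (rule AE_I2)
        fix x assume "x \<in> space \<mu>"
        then have x: "x \<in> Lam" using space by simp
        have ne: "X i - t \<noteq> 0" using X1 by auto
        have "\<bar>q i x\<bar> \<le> M"
          using lip[OF x, of "X i" t] ne unfolding q_def
          by (simp add: divide_le_eq abs_divide)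
        then show "norm (\<phi> x * q i x) \<le> B * M"
          unfolding real_norm_def abs_mult
          by (intro mult_mono) (use phib x B0 in auto)
      qed
    qed
  qed
qed



lemma cont_bnd:
  fixes q :: "'a::real_normed_vector \<Rightarrow> 'b::real_normed_vector"
  assumes "continuous_on UNIV q" "compact Lam"
  shows "\<exists>B. \<forall>y\<in>Lam. norm (q y) \<le> B"
proof -
  have "compact (q ` Lam)"
    by (rule compact_continuous_image[OF continuous_on_subset[OF assms(1)] assms(2)]) simp
  then have "bounded (q ` Lam)" by (rule compact_imp_bounded)
  then show ?thesis unfolding bounded_iff by auto
qed

lemma cont_meas:
  fixes q :: "'a::topological_space \<Rightarrow> 'b::topological_space" and \<mu> :: "'a measure"
  assumes sets: "sets \<mu> = sets (restrict_space borel Lam)" and c: "continuous_on UNIV q"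
  shows "q \<in> borel_measurable \<mu>"
proof -
  have 1: "q \<in> borel_measurable (restrict_space borel Lam)"
    by (intro measurable_restrict_space1 borel_measurable_continuous_onI c)
  have e: "(borel_measurable \<mu> :: ('a \<Rightarrow> 'b) set) = borel_measurable (restrict_space borel Lam)"
    by (rule measurable_cong_sets[OF sets refl])
  show ?thesis unfolding e by (rule 1)
qed

lemma bnd_integrable:
  fixes q :: "'a \<Rightarrow> 'b::{banach,second_countable_topology}"
  assumes "finite_measure \<mu>" "space \<mu> = Lam" "q \<in> borel_measurable \<mu>" "\<forall>y\<in>Lam. norm (q y) \<le> B"
  shows "integrable \<mu> q"
proof -
  interpret finite_measure \<mu> by fact
  show ?thesis
    by (rule integrable_const_bound[where B=B]) (use assms in \<open>auto intro!: AE_I2\<close>)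
qed

lemma sym_deriv:
  fixes h :: "real^'m \<Rightarrow> real^'n" and R :: "real^'m^'m"
  assumes hd: "\<And>x. h differentiable (at x)" and hR: "\<forall>y. h (R *v y) = h y"
  shows "frechet_derivative h (at (R *v y)) (R *v u) = frechet_derivative h (at y) u"
proof -
  have lin: "((\<lambda>x. R *v x) has_derivative (\<lambda>x. R *v x)) (at y)"
    by (rule linear_imp_has_derivative) simp
  have "((\<lambda>x. h (R *v x)) has_derivative (\<lambda>u. frechet_derivative h (at (R *v y)) (R *v u))) (at y)"
    by (rule has_derivative_compose[OF lin fd_works[OF hd]])
  moreover have "(\<lambda>x. h (R *v x)) = h" using hR by auto
  ultimately have "(\<lambda>u. frechet_derivative h (at (R *v y)) (R *v u)) = frechet_derivative h (at y)"
    using frechet_derivative_at by metis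
  then show ?thesis by metis
qed



theorem proposition4p2:
  fixes r :: nat and Lam :: "(real^'m) set" and g :: "real^'m \<Rightarrow> real^'m"
    and fl :: "real \<Rightarrow> real^'m \<Rightarrow> real^'m" and \<mu> :: "(real^'m) measure"
    and R :: "real^'m^'m"
    and f :: "real^'m \<Rightarrow> real^'p" and h :: "real^'m \<Rightarrow> real^'n"
  assumes r: "r \<ge> 1"
    and Lam: "compact Lam"
    and g: "Ck r g"
    and flow: "is_flow_on g fl Lam"
    and prob: "prob_space \<mu>"
    and space: "space \<mu> = Lam" and sets: "sets \<mu> = sets (restrict_space borel Lam)"
    and inv: "\<forall>t. \<forall>A\<in>sets \<mu>. fl t -` A \<inter> Lam \<in> sets \<mu> \<and> measure \<mu> (fl t -` A \<inter> Lam) = measure \<mu> A"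
    and ergodic: "\<forall>A\<in>sets \<mu>. (\<forall>t. fl t -` A \<inter> Lam = A) \<longrightarrow> measure \<mu> A = 0 \<or> measure \<mu> A = 1"
    and mixing: "\<forall>(\<phi>::real^'m \<Rightarrow> real) (\<psi>::real^'m \<Rightarrow> real). \<phi> \<in> borel_measurable \<mu> \<and> \<psi> \<in> borel_measurable \<mu> \<and>
        integrable \<mu> (\<lambda>x. (\<phi> x)\<^sup>2) \<and> integrable \<mu> (\<lambda>x. (\<psi> x)\<^sup>2) \<longrightarrow>
        ((\<lambda>t. \<integral>x. \<phi> x * \<psi> (fl t x) \<partial>\<mu>) \<longlongrightarrow> (\<integral>x. \<phi> x \<partial>\<mu>) * (\<integral>x. \<psi> x \<partial>\<mu>)) at_top"
    and R2: "R ** R = mat 1"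
    and RLam: "(\<lambda>y. R *v y) ` Lam = Lam"
    and Rinv: "\<forall>A\<in>sets \<mu>. measure \<mu> ((\<lambda>y. R *v y) -` A \<inter> Lam) = measure \<mu> A"
    and gR: "\<forall>y\<in>Lam. g (R *v y) = - (R *v g y)"
    and f: "Ck r f" and fR: "\<forall>y\<in>Lam. f (R *v y) = f y" and f0: "integral\<^sup>L \<mu> f = 0"
    and h: "Ck (r + 1) h" and hR: "\<forall>y. h (R *v y) = h y"
  shows "\<exists>v :: real^'m \<Rightarrow> ((real^'p) \<times> (real^'n)).
           admissible r Lam R \<mu> v \<and>
           E0_is \<mu> fl v (\<chi> i j. \<integral>x. f x $ i * h x $ j \<partial>\<mu>)"
proof -
  interpret P: prob_space \<mu> by (rule prob)
  have fin: "finite_measure \<mu>" using prob by (simp add: prob_space_def)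
  have fl0: "\<And>y. y \<in> Lam \<Longrightarrow> fl 0 y = y" and flL: "\<And>y t. y \<in> Lam \<Longrightarrow> fl t y \<in> Lam"
    and fld: "\<And>y t. y \<in> Lam \<Longrightarrow> ((\<lambda>s. fl s y) has_vector_derivative g (fl t y)) (at t)"
    using flow unfolding is_flow_on_def by auto
  have flm: "fl t \<in> measurable \<mu> \<mu>" for t
    by (rule measurableI) (use flL inv space in auto)
  have distr: "distr \<mu> \<mu> (fl t) = \<mu>" for t
  proof (rule measure_eqI)
    show "sets (distr \<mu> \<mu> (fl t)) = sets \<mu>" by simp
    fix A assume "A \<in> sets (distr \<mu> \<mu> (fl t))"
    then have A: "A \<in> sets \<mu>" by simp
    have "emeasure (distr \<mu> \<mu> (fl t)) A = emeasure \<mu> (fl t -` A \<inter> space \<mu>)"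
      by (rule emeasure_distr[OF flm A])
    also have "\<dots> = emeasure \<mu> A" using inv A space by (simp add: P.emeasure_eq_measure)
    finally show "emeasure (distr \<mu> \<mu> (fl t)) A = emeasure \<mu> A" .
  qed
  have invint: "(\<integral>x. q (fl t x) \<partial>\<mu>) = (\<integral>x. q x \<partial>\<mu>)" if "q \<in> borel_measurable \<mu>" for t and q :: "real^'m \<Rightarrow> real"
    using integral_distr[OF flm that, of t] distr[of t] by simp
  have hS: "Ck (Suc r) h" using h by simp
  have hd: "\<And>x. h differentiable (at x)" and hDk: "\<And>u. Ck r (\<lambda>x. frechet_derivative h (at x) u)"
    using hS by auto
  define w where "w x = frechet_derivative h (at x) (g x)" for x
  have linDh: "linear (frechet_derivative h (at x))" for x using hd linear_frechet_derivative by blast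
  have wexp: "w = (\<lambda>x. \<Sum>k\<in>UNIV. (g x $ k) *\<^sub>R frechet_derivative h (at x) (axis k 1))"
  proof
    fix x
    have "g x = (\<Sum>k\<in>UNIV. (g x $ k) *\<^sub>R axis k 1)"
      using basis_expansion[of "g x"] by (simp add: scalar_mult_eq_scaleR)
    then have "w x = frechet_derivative h (at x) (\<Sum>k\<in>UNIV. (g x $ k) *\<^sub>R axis k 1)"
      unfolding w_def by (rule arg_cong)
    also have "\<dots> = (\<Sum>k\<in>UNIV. (g x $ k) *\<^sub>R frechet_derivative h (at x) (axis k 1))"
      using linDh[of x] by (simp add: linear_sum linear_scale)
    finally show "w x = (\<Sum>k\<in>UNIV. (g x $ k) *\<^sub>R frechet_derivative h (at x) (axis k 1))" .
  qed
  have wC: "Ck r w" unfolding wexp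
    by (intro Ck_sum Ck_scaleR Ck_nth g hDk) auto
  have wc: "continuous_on UNIV w" using Ck_cont[OF wC] .
  have wR: "w (R *v y) = - w y" if y: "y \<in> Lam" for y
  proof -
    have "w (R *v y) = frechet_derivative h (at (R *v y)) (- (R *v g y))"
      unfolding w_def using gR y by simp
    also have "\<dots> = - frechet_derivative h (at (R *v y)) (R *v g y)"
      using linDh by (simp add: linear_neg)
    also have "\<dots> = - w y" unfolding w_def using sym_deriv[OF hd hR] by simp
    finally show ?thesis .
  qed
  define v where "v x = (f x, - (1/2) *\<^sub>R w x)" for x
  have vC: "Ck r v" unfolding v_def
    by (intro Ck_pair f Ck_linear[OF bounded_linear_scaleR_right wC])
  have fc: "continuous_on UNIV f" using Ck_cont[OF f] .
  have hc: "continuous_on UNIV h" using Ck_cont[OF h] .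
  obtain Bw where Bw: "\<forall>y\<in>Lam. norm (w y) \<le> Bw" using cont_bnd[OF wc Lam] by blast
  have intw: "integrable \<mu> w"
    by (rule bnd_integrable[OF fin space cont_meas[OF sets wc] Bw])
  have intv: "integrable \<mu> v"
  proof -
    obtain Bv where Bv: "\<forall>y\<in>Lam. norm (v y) \<le> Bv" using cont_bnd[OF Ck_cont[OF vC] Lam] by blast
    show ?thesis by (rule bnd_integrable[OF fin space cont_meas[OF sets Ck_cont[OF vC]] Bv])
  qed
  obtain Bf where Bf: "\<forall>y\<in>Lam. norm (f y) \<le> Bf" using cont_bnd[OF fc Lam] by blast
  have intf: "integrable \<mu> f"
    by (rule bnd_integrable[OF fin space cont_meas[OF sets fc] Bf])
  have wint0: "integral\<^sup>L \<mu> w = 0"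
  proof -
    have "(\<integral>x. w x $ j \<partial>\<mu>) = 0" for j
    proof -
      define F where "F t = (\<integral>x. 1 * h (fl t x) $ j \<partial>\<mu>)" for t
      have hjc: "continuous_on UNIV (\<lambda>y. h y $ j)" using Ck_cont[OF Ck_nth[OF h]] .
      have wjc: "continuous_on UNIV (\<lambda>y. w y $ j)" using Ck_cont[OF Ck_nth[OF wC]] .
      obtain Kh where Kh: "\<forall>y\<in>Lam. norm (h y $ j) \<le> Kh" using cont_bnd[OF hjc Lam] by blast
      obtain Mw where Mw: "\<forall>y\<in>Lam. norm (w y $ j) \<le> Mw" using cont_bnd[OF wjc Lam] by blast
      have "(F has_real_derivative (\<integral>x. 1 * w (fl 0 x) $ j \<partial>\<mu>)) (at 0)"
        unfolding F_def
      proof (rule deriv_integral[where Lam=Lam and g=g and B=1 and K=Kh and M=Mw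
            and Dk="\<lambda>y u. frechet_derivative h (at y) u $ j"])
        show "((\<lambda>y. h y $ j) has_derivative (\<lambda>u. frechet_derivative h (at y) u $ j)) (at y)" for y
          by (rule bounded_linear.has_derivative[OF bounded_linear_vec_nth fd_works[OF hd]])
      qed (use fin space flm fld flL Kh Mw cont_meas[OF sets hjc] cont_meas[OF sets wjc] in \<open>auto simp: w_def\<close>)
      moreover have "F = (\<lambda>t. \<integral>x. h x $ j \<partial>\<mu>)"
        unfolding F_def using invint[OF cont_meas[OF sets hjc]] by simp
      ultimately have "(\<integral>x. 1 * w (fl 0 x) $ j \<partial>\<mu>) = 0"
        using DERIV_unique DERIV_const by metis
      moreover have "(\<integral>x. 1 * w (fl 0 x) $ j \<partial>\<mu>) = (\<integral>x. w x $ j \<partial>\<mu>)"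
        by (intro Bochner_Integration.integral_cong) (use fl0 space in auto)
      ultimately show ?thesis by simp
    qed
    moreover have "(\<integral>x. w x $ j \<partial>\<mu>) = integral\<^sup>L \<mu> w $ j" for j
      using integral_bounded_linear[OF bounded_linear_vec_nth[of j] intw] by simp
    ultimately show ?thesis by (simp add: vec_eq_iff)
  qed
  have vint0: "integral\<^sup>L \<mu> v = 0"
  proof -
    have "fst (integral\<^sup>L \<mu> v) = (\<integral>x. fst (v x) \<partial>\<mu>)"
      using integral_bounded_linear[OF bounded_linear_fst intv] by simp
    also have "\<dots> = 0" using f0 by (simp add: v_def)
    finally have 1: "fst (integral\<^sup>L \<mu> v) = 0" .
    have "snd (integral\<^sup>L \<mu> v) = (\<integral>x. snd (v x) \<partial>\<mu>)"
      using integral_bounded_linear[OF bounded_linear_snd intv] by simp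
    also have "\<dots> = 0" using wint0 by (simp add: v_def)
    finally have 2: "snd (integral\<^sup>L \<mu> v) = 0" .
    show ?thesis using 1 2 by (simp add: prod_eq_iff)
  qed
  have adm: "admissible r Lam R \<mu> v"
    unfolding admissible_def using vC vint0 by (auto simp: v_def fR wR)
  have E0: "E0_is \<mu> fl v (\<chi> i j. \<integral>x. f x $ i * h x $ j \<partial>\<mu>)"
    unfolding E0_is_def
  proof (intro allI)
    fix i j
    define \<phi> where "\<phi> x = fst (v x) $ i" for x
    define k where "k y = - (1/2) * h y $ j" for y
    define D where "D y = snd (v y) $ j" for y
    define K where "K t = (\<integral>x. \<phi> x * k (fl t x) \<partial>\<mu>)" for t
    define G where "G t = (\<integral>x. \<phi> x * D (fl t x) \<partial>\<mu>)" for t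
    have \<phi>e: "\<phi> = (\<lambda>x. f x $ i)" by (simp add: \<phi>_def v_def fun_eq_iff)
    have De: "D = (\<lambda>y. - (1/2) * w y $ j)" by (simp add: D_def v_def fun_eq_iff)
    have \<phi>c: "continuous_on UNIV \<phi>" unfolding \<phi>e using Ck_cont[OF Ck_nth[OF f]] .
    have kc: "continuous_on UNIV k" unfolding k_def
      using Ck_cont[OF Ck_linear[OF bounded_linear_mult_right Ck_nth[OF h]]] .
    have Dc: "continuous_on UNIV D" unfolding De
      using Ck_cont[OF Ck_linear[OF bounded_linear_mult_right Ck_nth[OF wC]]] .
    obtain B\<phi> where B\<phi>: "\<forall>y\<in>Lam. norm (\<phi> y) \<le> B\<phi>" using cont_bnd[OF \<phi>c Lam] by blast
    obtain Bk where Bk: "\<forall>y\<in>Lam. norm (k y) \<le> Bk" using cont_bnd[OF kc Lam] by blast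
    obtain BD where BD: "\<forall>y\<in>Lam. norm (D y) \<le> BD" using cont_bnd[OF Dc Lam] by blast
    have \<phi>m: "\<phi> \<in> borel_measurable \<mu>" by (rule cont_meas[OF sets \<phi>c])
    have km: "k \<in> borel_measurable \<mu>" by (rule cont_meas[OF sets kc])
    have Dm: "D \<in> borel_measurable \<mu>" by (rule cont_meas[OF sets Dc])
    have der: "(K has_real_derivative G t) (at t)" for t
      unfolding K_def G_def
    proof (rule deriv_integral[where Lam=Lam and g=g and B=B\<phi> and K=Bk and M=BD
          and Dk="\<lambda>y u. - (1/2) * (frechet_derivative h (at y) u $ j)"])
      show "(k has_derivative (\<lambda>u. - (1/2) * (frechet_derivative h (at y) u $ j))) (at y)" for y
        unfolding k_def
        by (rule has_derivative_mult_right[OF bounded_linear.has_derivative[OF bounded_linear_vec_nth fd_works[OF hd]]])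
    qed (use fin space flm fld flL B\<phi> Bk BD \<phi>m km Dm in \<open>auto simp: De w_def\<close>)
    have ftc: "(G has_integral (K T - K 0)) {0..T}" if "T \<ge> 0" for T
    proof (rule fundamental_theorem_of_calculus[OF that])
      fix t assume "t \<in> {0..T}"
      show "(K has_vector_derivative G t) (at t within {0..T})"
        using der[of t] by (simp add: has_real_derivative_iff_has_vector_derivative has_vector_derivative_at_within)
    qed
    have Gdef: "(\<lambda>t. \<integral>x. fst (v x) $ i * snd (v (fl t x)) $ j \<partial>\<mu>) = G"
      by (simp add: G_def \<phi>_def D_def fun_eq_iff)
    have sq: "integrable \<mu> (\<lambda>x. (q x)\<^sup>2)" if qc: "continuous_on UNIV q" for q :: "real^'m \<Rightarrow> real"
    proof -
      obtain Bq where Bq: "\<forall>y\<in>Lam. norm (q y) \<le> Bq" using cont_bnd[OF qc Lam] by blast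
      have "\<forall>y\<in>Lam. norm ((q y)\<^sup>2) \<le> Bq\<^sup>2"
      proof
        fix y assume "y \<in> Lam"
        then have "\<bar>q y\<bar> \<le> Bq" using Bq by simp
        then have "\<bar>q y\<bar>\<^sup>2 \<le> Bq\<^sup>2" by (rule power_mono) simp
        then show "norm ((q y)\<^sup>2) \<le> Bq\<^sup>2" by simp
      qed
      moreover have "(\<lambda>x. (q x)\<^sup>2) \<in> borel_measurable \<mu>" using cont_meas[OF sets qc] by measurable
      ultimately show ?thesis using bnd_integrable[OF fin space] by blast
    qed
    have mix: "(K \<longlongrightarrow> (\<integral>x. \<phi> x \<partial>\<mu>) * (\<integral>x. k x \<partial>\<mu>)) at_top"
      unfolding K_def using mixing \<phi>m km sq[OF \<phi>c] sq[OF kc] by blast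
    have int\<phi>: "(\<integral>x. \<phi> x \<partial>\<mu>) = 0"
      unfolding \<phi>e using integral_bounded_linear[OF bounded_linear_vec_nth[of i] intf] f0 by simp
    have K0: "K 0 = - (1/2) * (\<integral>x. f x $ i * h x $ j \<partial>\<mu>)"
    proof -
      have "K 0 = (\<integral>x. - (1/2) * (f x $ i * h x $ j) \<partial>\<mu>)"
        unfolding K_def \<phi>e k_def
        by (intro Bochner_Integration.integral_cong) (use fl0 space in auto)
      then show ?thesis by simp
    qed
    have lim: "((\<lambda>T. 2 * (K T - K 0)) \<longlongrightarrow> (\<chi> i j. \<integral>x. f x $ i * h x $ j \<partial>\<mu>) $ i $ j) at_top"
    proof -
      have "((\<lambda>T. 2 * (K T - K 0)) \<longlongrightarrow> 2 * (0 - K 0)) at_top"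
        using mix int\<phi> by (intro tendsto_intros) simp
      then show ?thesis using K0 by simp
    qed
    show "(\<forall>T\<ge>0. (\<lambda>t. \<integral>x. fst (v x) $ i * snd (v (fl t x)) $ j \<partial>\<mu>) integrable_on {0..T}) \<and>
        ((\<lambda>T. 2 * integral {0..T} (\<lambda>t. \<integral>x. fst (v x) $ i * snd (v (fl t x)) $ j \<partial>\<mu>))
          \<longlongrightarrow> (\<chi> i j. \<integral>x. f x $ i * h x $ j \<partial>\<mu>) $ i $ j) at_top"
      unfolding Gdef
    proof (intro conjI allI impI)
      fix T :: real assume "T \<ge> 0"
      then show "G integrable_on {0..T}" using ftc by blast
    next
      show "((\<lambda>T. 2 * integral {0..T} G) \<longlongrightarrow> (\<chi> i j. \<integral>x. f x $ i * h x $ j \<partial>\<mu>) $ i $ j) at_top"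
      proof (rule Lim_transform_eventually[OF lim])
        show "\<forall>\<^sub>F T in at_top. 2 * (K T - K 0) = 2 * integral {0..T} G"
          using eventually_ge_at_top[of 0] by eventually_elim (use ftc integral_unique in metis)
      qed
    qed
  qed
  show ?thesis using adm E0 by blast
qed


end
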